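(* Let $n \ge 1$ and let $a, b \ge 1$ be integers with $a + b \le 2n$. The number of Dyck paths of semilength $n+1$ whose first peak has height $a$ and whose last peak has height $b$ is \[ \binom{2n-a-b}{n-a} - \binom{2n-a-b}{n}. \]
   Context: A Dyck path of semilength $N$ is a lattice path from $(0,0)$ to $(2N,0)$ with steps $U=(1,1)$ and $D=(1,-1)$ never going below the $x$-axis. A peak is an up-step immediately followed by a down-step; its height is the $y$-coordinate at the end of its up-step. Binomial coefficients $\binom{p}{q}$ are $0$ when $q<0$ or $q>p$. *)

theory Defs
  imports Main
begin

text \<open>A lattice path is encoded as a list of steps: True = up-step U, False = down-step D.\<close>

definition ht :: "bool list \<Rightarrow> int" where
  "ht p = (\<Sum>s\<leftarrow>p. if s then 1 else -1)"

definition dyck_path :: "nat \<Rightarrow> bool list \<Rightarrow> bool" where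
  "dyck_path N p \<longleftrightarrow> length p = 2 * N \<and> ht p = 0 \<and>
     (\<forall>k \<le> length p. ht (take k p) \<ge> 0)"

definition is_peak :: "bool list \<Rightarrow> nat \<Rightarrow> bool" where
  "is_peak p i \<longleftrightarrow> Suc i < length p \<and> p ! i \<and> \<not> p ! Suc i"

definition peak_height :: "bool list \<Rightarrow> nat \<Rightarrow> int" where
  "peak_height p i = ht (take (Suc i) p)"

definition first_peak_height :: "bool list \<Rightarrow> int" where
  "first_peak_height p = peak_height p (LEAST i. is_peak p i)"

definition last_peak_height :: "bool list \<Rightarrow> int" where
  "last_peak_height p = peak_height p (GREATEST i. is_peak p i)"

definition binom :: "int \<Rightarrow> int \<Rightarrow> int" where
  "binom p q = (if 0 \<le> q \<and> q \<le> p then int (nat p choose nat q) else 0)"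

end

theory Submission
  imports Defs
begin

definition nonneg :: "int \<Rightarrow> bool list \<Rightarrow> bool" where
  "nonneg h xs \<longleftrightarrow> (\<forall>k \<le> length xs. 0 \<le> h + ht (take k xs))"

lemma ht_Nil[simp]: "ht [] = 0" by (simp add: ht_def)
lemma ht_Cons[simp]: "ht (s # xs) = (if s then 1 else -1) + ht xs" by (simp add: ht_def)
lemma ht_append[simp]: "ht (xs @ ys) = ht xs + ht ys" by (simp add: ht_def)
lemma ht_repT[simp]: "ht (replicate A True) = int A" by (induction A) auto
lemma ht_repF[simp]: "ht (replicate A False) = - int A" by (induction A) auto

lemma ht_ups: "ht w = 2 * int (length (filter id w)) - int (length w)"
  by (induction w) auto

lemma all_le_Suc: "(\<forall>k\<le>Suc m. P k) \<longleftrightarrow> P 0 \<and> (\<forall>k\<le>m. P (Suc k))"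
  apply auto
  apply (case_tac k)
   apply auto
  done

lemma nonneg_ge0: "nonneg h xs \<Longrightarrow> 0 \<le> h"
  unfolding nonneg_def by (metis take0 ht_Nil add_0_right le0)
lemma nonneg_end: "nonneg h xs \<Longrightarrow> 0 \<le> h + ht xs"
  unfolding nonneg_def by (metis order_refl take_all)

lemma nonneg_Nil[simp]: "nonneg h [] \<longleftrightarrow> 0 \<le> h" by (simp add: nonneg_def)
lemma nonneg_Cons[simp]: "nonneg h (s # xs) \<longleftrightarrow> 0 \<le> h \<and> nonneg (h + (if s then 1 else -1)) xs"
  unfolding nonneg_def by (simp only: length_Cons all_le_Suc) (simp add: add.assoc)
lemma nonneg_append[simp]: "nonneg h (xs @ ys) \<longleftrightarrow> nonneg h xs \<and> nonneg (h + ht xs) ys"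
proof (induction xs arbitrary: h)
  case Nil then show ?case using nonneg_ge0 by auto
next
  case (Cons x xs) then show ?case by (auto simp: add.assoc)
qed
lemma nonneg_repT[simp]: "nonneg h (replicate A True) \<longleftrightarrow> 0 \<le> h"
proof (induction A arbitrary: h)
  case 0 then show ?case by (simp only: replicate_0 nonneg_Nil)
next
  case (Suc A) then show ?case by (simp only: replicate_Suc nonneg_Cons if_True) linarith
qed
lemma nonneg_repF[simp]: "nonneg h (replicate A False) \<longleftrightarrow> int A \<le> h"
proof (induction A arbitrary: h)
  case 0 then show ?case by (simp only: replicate_0 nonneg_Nil of_nat_0)
next
  case (Suc A) then show ?case by (simp only: replicate_Suc nonneg_Cons if_False) linarith
qed

lemma dyck_iff: "dyck_path N p \<longleftrightarrow> length p = 2 * N \<and> ht p = 0 \<and> nonneg 0 p"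
  by (simp add: dyck_path_def nonneg_def)

definition P :: "nat \<Rightarrow> nat \<Rightarrow> nat \<Rightarrow> bool list set" where
  "P L x u = {w. length w = L \<and> length (filter id w) = u \<and> nonneg (int x) w}"

lemma P_finite: "finite (P L x u)"
  by (rule finite_subset[OF _ finite_lists_length_eq[of "UNIV::bool set" L]]) (auto simp: P_def)

lemma P_0: "P 0 x u = (if u = 0 then {[]} else {})"
  by (auto simp: P_def)

lemma P_Suc: "P (Suc L) x u = (if u = 0 then {} else Cons True ` P L (Suc x) (u - 1))
   \<union> (if x = 0 then {} else Cons False ` P L (x - 1) u)"
proof (intro set_eqI iffI)
  fix w assume "w \<in> P (Suc L) x u"
  then obtain s w' where w: "w = s # w'" and l: "length w' = L" and f: "length (filter id (s#w')) = u"
    and nn: "nonneg (int x + (if s then 1 else -1)) w'"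
    by (cases w) (auto simp: P_def)
  show "w \<in> (if u = 0 then {} else Cons True ` P L (Suc x) (u - 1))
   \<union> (if x = 0 then {} else Cons False ` P L (x - 1) u)"
  proof (cases s)
    case True then show ?thesis using w l f nn by (auto simp: P_def add.commute)
  next
    case False
    have "0 \<le> int x - 1" using nn False nonneg_ge0 by fastforce
    then have "x \<noteq> 0" "int (x - 1) = int x - 1" by auto
    then show ?thesis using w l f nn False by (auto simp: P_def)
  qed
next
  fix w assume "w \<in> (if u = 0 then {} else Cons True ` P L (Suc x) (u - 1))
   \<union> (if x = 0 then {} else Cons False ` P L (x - 1) u)"
  then show "w \<in> P (Suc L) x u"
    by (auto simp: P_def add.commute split: if_splits)
qed

lemma card_P: "L \<le> x + 2 * u + 1 \<Longrightarrow>
  int (card (P L x u)) = int (L choose u) - int (L choose (x + u + 1))"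
proof (induction L arbitrary: x u)
  case 0 then show ?case by (simp add: P_0)
next
  case (Suc L)
  note IH = Suc.IH and pr = Suc.prems
  have inj: "inj (Cons s)" for s :: bool by (simp add: inj_def)
  have c1: "card (Cons s ` P L y v) = card (P L y v)" for s y v
    by (rule card_image) (simp add: inj_def)
  have dis: "(Cons True ` A) \<inter> (Cons False ` B) = {}" for A B by auto
  show ?case
  proof (cases u)
    case 0
    show ?thesis
    proof (cases x)
      case 0 then show ?thesis using pr \<open>u = 0\<close> by (simp add: P_Suc)
    next
      case (Suc x')
      have "int (card (P L x' 0)) = 1 - int (L choose x)" using IH[of x' 0] pr \<open>u=0\<close> Suc by simp
      moreover have "L choose (Suc x) = 0" using pr \<open>u=0\<close> Suc by simp
      ultimately show ?thesis using \<open>u=0\<close> Suc by (simp add: P_Suc c1)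
    qed
  next
    case (Suc u')
    show ?thesis
    proof (cases x)
      case 0
      have "int (card (P L 1 u')) = int (L choose u') - int (L choose (u' + 2))"
        using IH[of 1 u'] pr \<open>u = Suc u'\<close> 0 by simp
      then show ?thesis using \<open>u = Suc u'\<close> 0 by (simp add: P_Suc c1 numeral_2_eq_2)
    next
      case (Suc x')
      have i1: "int (card (P L (Suc x) u')) = int (L choose u') - int (L choose (x + u + 1))"
        using IH[of "Suc x" u'] pr \<open>u = Suc u'\<close> by simp
      have i2: "int (card (P L x' u)) = int (L choose u) - int (L choose (x + u))"
        using IH[of x' u] pr Suc by simp
      have "card (P (Suc L) x u) = card (Cons True ` P L (Suc x) u') + card (Cons False ` P L x' u)"
        using \<open>u = Suc u'\<close> Suc by (simp add: P_Suc card_Un_disjoint P_finite dis)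
      then show ?thesis using i1 i2 \<open>u = Suc u'\<close> Suc by (simp add: c1)
    qed
  qed
qed


lemma decomp:
  assumes d: "dyck_path N p" and fa: "first_peak_height p = int A"
    and lb: "last_peak_height p = int B" and AB: "A + B < 2 * N"
  shows "\<exists>w. p = replicate A True @ False # w @ True # replicate B False"
proof -
  have len: "length p = 2*N" and h0: "ht p = 0" and nn: "nonneg 0 p" using d by (auto simp: dyck_iff)
  have lpos: "length p > 0" using len AB by simp
  have p0: "p ! 0"
  proof -
    obtain s p' where "p = s # p'" using lpos by (cases p) auto
    moreover have "nonneg (if s then 1 else -1) p'" using nn calculation by simp
    then have "0 \<le> (if s then 1 else -1 :: int)" by (rule nonneg_ge0)
    ultimately show ?thesis by (cases s) auto
  qed
  have plast: "\<not> p ! (length p - 1)"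
  proof
    assume a: "p ! (length p - 1)"
    have pe: "p = butlast p @ [last p]" using lpos by simp
    have ll: "last p" using a lpos by (simp add: last_conv_nth)
    have "nonneg 0 (butlast p @ [last p])" using nn pe by simp
    then have "0 \<le> ht (butlast p)" using nonneg_end by fastforce
    moreover have "ht p = ht (butlast p) + 1" using ll by (subst pe) simp
    ultimately show False using h0 by simp
  qed
  define j where "j = (LEAST j. j < length p \<and> \<not> p ! j)"
  have jex: "j < length p \<and> \<not> p ! j" unfolding j_def
    by (rule LeastI[of _ "length p - 1"]) (use plast lpos in auto)
  have j0: "j \<noteq> 0"
  proof
    assume "j = 0" then show False using jex p0 by simp
  qed
  have "p ! (j - 1)"
  proof (rule ccontr)
    assume "\<not> p ! (j - 1)"
    then have "j - 1 < length p \<and> \<not> p ! (j - 1)" using jex by auto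
    then have "j \<le> j - 1" unfolding j_def by (rule Least_le)
    then show False using j0 by simp
  qed
  then have expk: "is_peak p (j - 1)" using jex j0 by (simp add: is_peak_def)
  define i0 where "i0 = (LEAST i. is_peak p i)"
  have pk0: "is_peak p i0" unfolding i0_def by (rule LeastI[of "is_peak p", OF expk])
  have allT: "\<forall>k\<le>i0. p ! k"
  proof (intro allI impI)
    fix k assume "k \<le> i0" then show "p ! k"
    proof (induction k)
      case 0 then show ?case using p0 by simp
    next
      case (Suc k)
      then have pk: "p ! k" by simp
      show ?case
      proof (rule ccontr)
        assume "\<not> p ! Suc k"
        then have "is_peak p k" using pk Suc.prems pk0 by (auto simp: is_peak_def)
        then have "i0 \<le> k" unfolding i0_def by (rule Least_le)
        then show False using Suc.prems by simp
      qed
    qed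
  qed
  have tk0: "take (Suc i0) p = replicate (Suc i0) True"
    using allT pk0 by (intro nth_equalityI) (auto simp: is_peak_def simp del: replicate_Suc)
  have "first_peak_height p = int (Suc i0)"
    unfolding first_peak_height_def peak_height_def i0_def[symmetric] tk0 by simp
  then have Ai0: "A = Suc i0" using fa by simp
  have bnd: "\<And>y. is_peak p y \<Longrightarrow> y \<le> length p" by (auto simp: is_peak_def)
  define i1 where "i1 = (GREATEST i. is_peak p i)"
  have pk1: "is_peak p i1" unfolding i1_def by (rule GreatestI_nat[of "is_peak p", OF pk0 bnd])
  have i01: "i0 \<le> i1" unfolding i1_def by (rule Greatest_le_nat[of "is_peak p", OF pk0 bnd])
  have allF0: "\<forall>d. i1 < length p - 1 - d \<longrightarrow> \<not> p ! (length p - 1 - d)"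
  proof
    fix d show "i1 < length p - 1 - d \<longrightarrow> \<not> p ! (length p - 1 - d)"
    proof (induction d)
      case 0 then show ?case using plast by simp
    next
      case (Suc d)
      show ?case
      proof
        assume lt: "i1 < length p - 1 - Suc d"
        have e: "length p - 1 - d = Suc (length p - 1 - Suc d)" using lt by simp
        have nf: "\<not> p ! Suc (length p - 1 - Suc d)" using Suc.IH lt e by simp
        show "\<not> p ! (length p - 1 - Suc d)"
        proof
          assume "p ! (length p - 1 - Suc d)"
          then have "is_peak p (length p - 1 - Suc d)" using nf lt by (auto simp: is_peak_def)
          then have "length p - 1 - Suc d \<le> i1" unfolding i1_def by (rule Greatest_le_nat[of "is_peak p", OF _ bnd])
          then show False using lt by simp
        qed
      qed
    qed
  qed
  have allF: "\<not> p ! k" if "i1 < k" "k < length p" for k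
    using allF0[rule_format, of "length p - 1 - k"] that by simp
  have dr1: "drop (Suc i1) p = replicate (length p - Suc i1) False"
    using allF by (intro nth_equalityI) auto
  have "ht p = ht (take (Suc i1) p) + ht (drop (Suc i1) p)"
    by (metis append_take_drop_id ht_append)
  moreover have "ht (take (Suc i1) p) = int B"
    using lb unfolding last_peak_height_def peak_height_def i1_def[symmetric] .
  ultimately have Bi1: "length p - Suc i1 = B" using h0 dr1 by simp
  have i1l: "i1 < length p" using pk1 by (simp add: is_peak_def)
  have "i0 \<noteq> i1"
  proof
    assume "i0 = i1"
    then have "A + B = length p" using Ai0 Bi1 i1l by simp
    then show False using AB len by simp
  qed
  moreover have "Suc i0 \<noteq> i1" using pk0 pk1 by (auto simp: is_peak_def)
  ultimately have Ai1: "Suc A \<le> i1" using i01 Ai0 by simp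
  define w where "w = drop (Suc A) (take i1 p)"
  have "drop i1 p = p ! i1 # drop (Suc i1) p" using i1l by (rule Cons_nth_drop_Suc[symmetric])
  also have "\<dots> = True # replicate B False" using pk1 dr1 Bi1 by (simp add: is_peak_def)
  finally have D: "drop i1 p = True # replicate B False" .
  have "take i1 p = take (Suc A) (take i1 p) @ w" unfolding w_def by (rule append_take_drop_id[symmetric])
  also have "take (Suc A) (take i1 p) = take (Suc A) p" using Ai1 by (simp add: min_def)
  also have "\<dots> = take A p @ [p ! A]" using Ai1 i1l by (simp add: take_Suc_conv_app_nth)
  also have "take A p = replicate A True" using tk0 Ai0 by simp
  also have "p ! A = False" using pk0 Ai0 by (simp add: is_peak_def)
  finally have T: "take i1 p = replicate A True @ [False] @ w" by simp
  have "p = take i1 p @ drop i1 p" by simp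
  then show ?thesis using T D by auto
qed


lemma f_peaks:
  assumes A1: "A \<ge> 1" and B1: "B \<ge> 1"
    and p: "p = replicate A True @ False # w @ True # replicate B False"
  shows "first_peak_height p = int A" and "last_peak_height p = int A + ht w"
proof -
  have lp: "length p = A + 2 + length w + B" using p by simp
  have nthA: "k < A \<Longrightarrow> p ! k" for k using p by (simp add: nth_append)
  have pA: "\<not> p ! A" using p by (simp add: nth_append)
  have "(LEAST i. is_peak p i) = A - 1"
  proof (rule Least_equality)
    show "is_peak p (A - 1)" using A1 nthA pA lp by (auto simp: is_peak_def)
  next
    fix y assume "is_peak p y"
    then show "A - 1 \<le> y" using nthA[of "Suc y"] by (cases "Suc y < A") (auto simp: is_peak_def)
  qed
  moreover have "take A p = replicate A True" using p by simp
  ultimately show "first_peak_height p = int A"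
    using A1 by (simp add: first_peak_height_def peak_height_def)
  define i where "i = A + 1 + length w"
  define q where "q = replicate A True @ False # w @ [True]"
  have p2: "p = q @ replicate B False" using p by (simp add: q_def)
  have lq: "length q = Suc i" by (simp add: q_def i_def)
  have qi: "q ! i = True" by (simp add: q_def i_def nth_append)
  have pi: "p ! i" unfolding p2 using lq qi by (simp add: nth_append)
  have pF: "i < k \<Longrightarrow> k < length p \<Longrightarrow> \<not> p ! k" for k
    unfolding p2 using lq by (simp add: nth_append)
  have "(GREATEST i. is_peak p i) = i"
  proof (rule Greatest_equality)
    show "is_peak p i" using pi pF[of "Suc i"] lp B1 by (auto simp: is_peak_def i_def)
  next
    fix y assume "is_peak p y"
    then show "y \<le> i" using pF by (auto simp: is_peak_def) (meson Suc_lessD not_le_imp_less)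
  qed
  moreover have "take (Suc i) p = replicate A True @ False # w @ [True]"
    using lq unfolding p2 by simp (simp add: q_def)
  ultimately show "last_peak_height p = int A + ht w"
    unfolding last_peak_height_def peak_height_def by simp
qed

lemma binom_nat: "binom (int p) (int q) = int (p choose q)"
  by (simp add: binom_def)

theorem mainTheorem6:
  fixes n :: nat and a b :: int
  assumes "n \<ge> 1" and "a \<ge> 1" and "b \<ge> 1" and "a + b \<le> 2 * int n"
  shows "int (card {p. dyck_path (n + 1) p \<and> first_peak_height p = a \<and> last_peak_height p = b})
           = binom (2 * int n - a - b) (int n - a) - binom (2 * int n - a - b) (int n)"
proof -
  obtain A B where a: "a = int A" and b: "b = int B" using assms
    by (metis nonneg_int_cases order_trans zero_le_one)
  have A1: "A \<ge> 1" and B1: "B \<ge> 1" and AB: "A + B \<le> 2 * n" using assms a b by auto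
  define L where "L = 2 * n - A - B"
  define f where "f w = replicate A True @ False # w @ True # replicate B False" for w
  define Q where "Q = {w. length w = L \<and> nonneg (int A - 1) w \<and> ht w = int B - int A}"
  let ?S = "{p. dyck_path (n + 1) p \<and> first_peak_height p = a \<and> last_peak_height p = b}"
  have SQ: "?S = f ` Q"
  proof (intro set_eqI iffI)
    fix p assume "p \<in> ?S"
    then have d: "dyck_path (n+1) p" and fa: "first_peak_height p = int A"
      and lb: "last_peak_height p = int B" using a b by auto
    obtain w where w: "p = f w" using decomp[OF d fa lb] AB unfolding f_def by auto
    have "w \<in> Q" using d A1 B1 AB unfolding dyck_iff w f_def Q_def L_def by auto
    then show "p \<in> f ` Q" using w by auto
  next
    fix p assume "p \<in> f ` Q"
    then obtain w where w: "p = f w" and wQ: "w \<in> Q" by auto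
    have "dyck_path (n+1) p" using wQ AB A1 B1 unfolding dyck_iff w f_def Q_def L_def by auto
    moreover have "first_peak_height p = a" "last_peak_height p = b"
      using f_peaks[OF A1 B1 w[unfolded f_def]] wQ a b by (auto simp: Q_def)
    ultimately show "p \<in> ?S" by auto
  qed
  have "inj_on f Q" by (auto simp: inj_on_def f_def)
  then have cS: "card ?S = card Q" using SQ card_image by metis
  have e1: "2 * int n - a - b = int L" using AB a b by (simp add: L_def)
  show ?thesis
  proof (cases "A \<le> n")
    case True
    have QP: "Q = P L (A - 1) (n - A)"
    proof (intro set_eqI iffI)
      fix w assume "w \<in> Q"
      then show "w \<in> P L (A - 1) (n - A)" using True A1 AB
        by (auto simp: Q_def P_def L_def ht_ups of_nat_diff)
    next
      fix w assume "w \<in> P L (A - 1) (n - A)"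
      then show "w \<in> Q" using True A1 AB
        by (auto simp: Q_def P_def L_def ht_ups of_nat_diff)
    qed
    have cP: "int (card Q) = int (L choose (n - A)) - int (L choose n)"
      unfolding QP using card_P[of L "A - 1" "n - A"] True A1 AB by (simp add: L_def)
    have e2: "int n - a = int (n - A)" using True a by simp
    show ?thesis using cS cP by (simp only: e1 e2 binom_nat)
  next
    case False
    have "Q = {}"
    proof (intro equals0I)
      fix w assume "w \<in> Q"
      then show False using False AB by (auto simp: Q_def L_def ht_ups)
    qed
    moreover have "binom (int L) (int n - a) = 0" using False a by (simp add: binom_def)
    moreover have "binom (int L) (int n) = 0" using False AB by (simp add: binom_def L_def)
    ultimately show ?thesis using cS e1 by simp
  qed
qed

end
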